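(* Let $\mathcal{N}$ be a deterministic negotiation such that for every node $n\in N$ that is reachable from $n_{\mathit{init}}$ by a local path, and every process $p\in\mathit{dom}(n)$, there exists a $p$-path from $n$ to $n_{\mathit{fin}}$. Then $\mathcal{N}$ is unsound if and only if some initial run leads to a deadlock configuration.
   Context: A negotiation is a tuple $\mathcal{N}=(\mathit{Proc},N,\mathit{dom},R,\delta)$ where $\mathit{Proc}$ is a finite set of processes, $N$ is a finite set of nodes (atomic negotiations), $\mathit{dom}:N\to 2^{\mathit{Proc}}\setminus\{\emptyset\}$, there are two distinguished nodes $n_{\mathit{init}},n_{\mathit{fin}}$ with $\mathit{dom}(n_{\mathit{init}})=\mathit{dom}(n_{\mathit{fin}})=\mathit{Proc}$, $R$ is a set of results, each node $n$ has a set $\mathit{out}(n)\subseteq R$ of results (nonempty for $n\neq n_{\mathit{fin}}$), and $\delta(n,a,p)\subseteq N$ is defined and nonempty exactly when $a\in\mathit{out}(n)$ and $p\in\mathit{dom}(n)$, with $p\in\mathit{dom}(n')$ for all $n'\in\delta(n,a,p)$. A configuration is a map $C$ assigning to each process a nonempty set of nodes; $C_{\mathit{init}}(p)=\{n_{\mathit{init}}\}$ and $C_{\mathit{fin}}(p)=\{n_{\mathit{fin}}\}$ for all $p$. A node $n$ is enabled in $C$ if $n\in C(p)$ for all $p\in\mathit{dom}(n)$; $C$ is a deadlock if no node is enabled in it. If $n$ is enabled in $C$ and $a\in\mathit{out}(n)$, then $C\xrightarrow{(n,a)}C'$ where $C'(p)=\delta(n,a,p)$ for $p\in\mathit{dom}(n)$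 and $C'(p)=C(p)$ otherwise. A run from $C_1$ is a finite or infinite sequence $(n_1,a_1)(n_2,a_2)\cdots$ with $C_1\xrightarrow{(n_1,a_1)}C_2\xrightarrow{(n_2,a_2)}\cdots$; a run is initial if it starts at $C_{\mathit{init}}$, and successful if it is initial, finite and ends in $C_{\mathit{fin}}$. $\mathcal{N}$ is sound if every finite initial run can be extended to a successful run. The graph of $\mathcal{N}$ has vertex set $N$ and an edge $n\xrightarrow{p,a}n'$ whenever $n'\in\delta(n,a,p)$. A local path is a path $n_0\xrightarrow{p_0,a_0}n_1\cdots\xrightarrow{p_{k-1},a_{k-1}}n_k$ in this graph; it is a $p$-path if $p_0=\dots=p_{k-1}=p$. A process $p$ is deterministic if $\delta(n,a,p)$ is a singleton for all $n$ with $p\in\mathit{dom}(n)$ and all $a\in\mathit{out}(n)$; $\mathcal{N}$ is deterministic if every process is deterministic. *)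

theory Defs
  imports Main
begin

text \<open>Configurations are maps 'p => 'n set; on processes outside Proc they are
  fixed to the empty set.\<close>

definition is_negotiation ::
  "'p set \<Rightarrow> 'n set \<Rightarrow> 'r set \<Rightarrow> ('n \<Rightarrow> 'p set) \<Rightarrow> 'n \<Rightarrow> 'n \<Rightarrow> ('n \<Rightarrow> 'r set)
   \<Rightarrow> ('n \<Rightarrow> 'r \<Rightarrow> 'p \<Rightarrow> 'n set) \<Rightarrow> bool" where
  "is_negotiation Proc N R dm ninit nfin out delta \<longleftrightarrow>
     finite Proc \<and> finite N \<and> ninit \<in> N \<and> nfin \<in> N \<and>
     (\<forall>n\<in>N. dm n \<noteq> {} \<and> dm n \<subseteq> Proc) \<and>
     dm ninit = Proc \<and> dm nfin = Proc \<and>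
     (\<forall>n\<in>N. out n \<subseteq> R) \<and>
     (\<forall>n\<in>N. n \<noteq> nfin \<longrightarrow> out n \<noteq> {}) \<and> out nfin = {} \<and>
     (\<forall>n\<in>N. \<forall>a\<in>out n. \<forall>p\<in>dm n.
        delta n a p \<noteq> {} \<and> delta n a p \<subseteq> N \<and> (\<forall>n'\<in>delta n a p. p \<in> dm n'))"

definition deterministic_process ::
  "'n set \<Rightarrow> ('n \<Rightarrow> 'p set) \<Rightarrow> ('n \<Rightarrow> 'r set) \<Rightarrow> ('n \<Rightarrow> 'r \<Rightarrow> 'p \<Rightarrow> 'n set) \<Rightarrow> 'p \<Rightarrow> bool" where
  "deterministic_process N dm out delta p \<longleftrightarrow>
     (\<forall>n\<in>N. p \<in> dm n \<longrightarrow> (\<forall>a\<in>out n. \<exists>n'. delta n a p = {n'}))"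

definition deterministic ::
  "'p set \<Rightarrow> 'n set \<Rightarrow> ('n \<Rightarrow> 'p set) \<Rightarrow> ('n \<Rightarrow> 'r set) \<Rightarrow> ('n \<Rightarrow> 'r \<Rightarrow> 'p \<Rightarrow> 'n set) \<Rightarrow> bool" where
  "deterministic Proc N dm out delta \<longleftrightarrow> (\<forall>p\<in>Proc. deterministic_process N dm out delta p)"

definition graph_edge ::
  "'n set \<Rightarrow> ('n \<Rightarrow> 'p set) \<Rightarrow> ('n \<Rightarrow> 'r set) \<Rightarrow> ('n \<Rightarrow> 'r \<Rightarrow> 'p \<Rightarrow> 'n set)
   \<Rightarrow> 'n \<Rightarrow> 'p \<Rightarrow> 'r \<Rightarrow> 'n \<Rightarrow> bool" where
  "graph_edge N dm out delta n p a n' \<longleftrightarrow>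
     n \<in> N \<and> a \<in> out n \<and> p \<in> dm n \<and> n' \<in> delta n a p"

definition local_path ::
  "'n set \<Rightarrow> ('n \<Rightarrow> 'p set) \<Rightarrow> ('n \<Rightarrow> 'r set) \<Rightarrow> ('n \<Rightarrow> 'r \<Rightarrow> 'p \<Rightarrow> 'n set) \<Rightarrow> 'n \<Rightarrow> 'n \<Rightarrow> bool" where
  "local_path N dm out delta n n' \<longleftrightarrow>
     (n, n') \<in> {(x, y). \<exists>p a. graph_edge N dm out delta x p a y}\<^sup>*"

definition p_path ::
  "'n set \<Rightarrow> ('n \<Rightarrow> 'p set) \<Rightarrow> ('n \<Rightarrow> 'r set) \<Rightarrow> ('n \<Rightarrow> 'r \<Rightarrow> 'p \<Rightarrow> 'n set) \<Rightarrow> 'p \<Rightarrow> 'n \<Rightarrow> 'n \<Rightarrow> bool" where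
  "p_path N dm out delta p n n' \<longleftrightarrow>
     (n, n') \<in> {(x, y). \<exists>a. graph_edge N dm out delta x p a y}\<^sup>*"

definition C_init :: "'p set \<Rightarrow> 'n \<Rightarrow> 'p \<Rightarrow> 'n set" where
  "C_init Proc ninit = (\<lambda>p. if p \<in> Proc then {ninit} else {})"

definition C_fin :: "'p set \<Rightarrow> 'n \<Rightarrow> 'p \<Rightarrow> 'n set" where
  "C_fin Proc nfin = (\<lambda>p. if p \<in> Proc then {nfin} else {})"

definition enabled :: "'n set \<Rightarrow> ('n \<Rightarrow> 'p set) \<Rightarrow> 'n \<Rightarrow> ('p \<Rightarrow> 'n set) \<Rightarrow> bool" where
  "enabled N dm n C \<longleftrightarrow> n \<in> N \<and> (\<forall>p\<in>dm n. n \<in> C p)"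

definition deadlock :: "'n set \<Rightarrow> ('n \<Rightarrow> 'p set) \<Rightarrow> ('p \<Rightarrow> 'n set) \<Rightarrow> bool" where
  "deadlock N dm C \<longleftrightarrow> \<not> (\<exists>n. enabled N dm n C)"

definition step ::
  "'n set \<Rightarrow> ('n \<Rightarrow> 'p set) \<Rightarrow> ('n \<Rightarrow> 'r set) \<Rightarrow> ('n \<Rightarrow> 'r \<Rightarrow> 'p \<Rightarrow> 'n set)
   \<Rightarrow> ('p \<Rightarrow> 'n set) \<Rightarrow> 'n \<times> 'r \<Rightarrow> ('p \<Rightarrow> 'n set) \<Rightarrow> bool" where
  "step N dm out delta C na C' \<longleftrightarrow>
     (case na of (n, a) \<Rightarrow> enabled N dm n C \<and> a \<in> out n \<and>
        C' = (\<lambda>p. if p \<in> dm n then delta n a p else C p))"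

fun run ::
  "'n set \<Rightarrow> ('n \<Rightarrow> 'p set) \<Rightarrow> ('n \<Rightarrow> 'r set) \<Rightarrow> ('n \<Rightarrow> 'r \<Rightarrow> 'p \<Rightarrow> 'n set)
   \<Rightarrow> ('p \<Rightarrow> 'n set) \<Rightarrow> ('n \<times> 'r) list \<Rightarrow> ('p \<Rightarrow> 'n set) \<Rightarrow> bool" where
  "run N dm out delta C [] C' \<longleftrightarrow> C' = C"
| "run N dm out delta C (na # rs) C' \<longleftrightarrow>
     (\<exists>C''. step N dm out delta C na C'' \<and> run N dm out delta C'' rs C')"

definition sound ::
  "'p set \<Rightarrow> 'n set \<Rightarrow> ('n \<Rightarrow> 'p set) \<Rightarrow> 'n \<Rightarrow> 'n \<Rightarrow> ('n \<Rightarrow> 'r set)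
   \<Rightarrow> ('n \<Rightarrow> 'r \<Rightarrow> 'p \<Rightarrow> 'n set) \<Rightarrow> bool" where
  "sound Proc N dm ninit nfin out delta \<longleftrightarrow>
     (\<forall>rs C. run N dm out delta (C_init Proc ninit) rs C \<longrightarrow>
        (\<exists>rs'. run N dm out delta (C_init Proc ninit) (rs @ rs') (C_fin Proc nfin)))"

end

theory Submission
  imports Defs
begin

lemma run_append:
  "run N dm out delta C (xs @ ys) C' \<longleftrightarrow>
   (\<exists>C''. run N dm out delta C xs C'' \<and> run N dm out delta C'' ys C')"
  by (induction xs arbitrary: C) auto

lemma run_det:
  "run N dm out delta C rs E \<Longrightarrow> run N dm out delta C rs E' \<Longrightarrow> E = E'"
  by (induction rs arbitrary: C) (auto simp: step_def split: prod.splits)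

context
  fixes Proc :: "'p set" and N :: "'n set" and R :: "'r set"
    and dm :: "'n \<Rightarrow> 'p set" and ninit nfin :: 'n
    and out :: "'n \<Rightarrow> 'r set" and delta :: "'n \<Rightarrow> 'r \<Rightarrow> 'p \<Rightarrow> 'n set"
  assumes neg: "is_negotiation Proc N R dm ninit nfin out delta"
    and det: "deterministic Proc N dm out delta"
begin

lemma negs: "finite Proc" "finite N" "ninit \<in> N" "nfin \<in> N" "dm ninit = Proc" "dm nfin = Proc"
    "out nfin = {}"
  using neg unfolding is_negotiation_def by blast+

lemma neg_dm: "n \<in> N \<Longrightarrow> dm n \<noteq> {} \<and> dm n \<subseteq> Proc"
  using neg unfolding is_negotiation_def by blast

lemma neg_delta: "n \<in> N \<Longrightarrow> a \<in> out n \<Longrightarrow> p \<in> dm n \<Longrightarrow>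
    delta n a p \<subseteq> N \<and> (\<forall>n'\<in>delta n a p. p \<in> dm n')"
  using neg unfolding is_negotiation_def by blast

abbreviation reach where "reach D E \<equiv> \<exists>rs. run N dm out delta D rs E"

definition Inv :: "('p \<Rightarrow> 'n set) \<Rightarrow> bool" where
  "Inv D \<longleftrightarrow> (\<forall>p\<in>Proc. \<exists>m. D p = {m} \<and> m \<in> N \<and> p \<in> dm m \<and> local_path N dm out delta ninit m)
     \<and> (\<forall>p. p \<notin> Proc \<longrightarrow> D p = {})"

lemma reach_trans: "reach A B \<Longrightarrow> reach B C \<Longrightarrow> reach A C"
proof -
  assume "reach A B" "reach B C"
  then obtain r1 r2 where "run N dm out delta A r1 B" "run N dm out delta B r2 C" by blast
  hence "run N dm out delta A (r1 @ r2) C" by (simp add: run_append, blast)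
  thus ?thesis by blast
qed

lemma inv_init: "Inv (C_init Proc ninit)"
  using negs by (auto simp: Inv_def C_init_def local_path_def)

lemma inv_step:
  assumes "Inv D" "step N dm out delta D (n, a) D'"
  shows "Inv D'"
proof -
  have en: "enabled N dm n D" and a: "a \<in> out n"
    and D': "D' = (\<lambda>p. if p \<in> dm n then delta n a p else D p)"
    using assms(2) by (auto simp: step_def)
  have nN: "n \<in> N" using en by (simp add: enabled_def)
  have dmP: "dm n \<subseteq> Proc" using neg_dm nN by simp
  show ?thesis unfolding Inv_def
  proof (intro conjI allI impI ballI)
    fix p assume p: "p \<in> Proc"
    show "\<exists>m. D' p = {m} \<and> m \<in> N \<and> p \<in> dm m \<and> local_path N dm out delta ninit m"
    proof (cases "p \<in> dm n")
      case True
      obtain m where m: "D p = {m}" "local_path N dm out delta ninit m"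
        using assms(1) p by (auto simp: Inv_def)
      have "n \<in> D p" using en True by (simp add: enabled_def)
      hence "m = n" using m by simp
      obtain m' where m': "delta n a p = {m'}"
        using det p nN True a unfolding deterministic_def deterministic_process_def by blast
      have "m' \<in> N" "p \<in> dm m'"
        using neg_delta[OF nN a True] m' by auto
      moreover have "local_path N dm out delta ninit m'"
      proof -
        have "(n, m') \<in> {(x, y). \<exists>p a. graph_edge N dm out delta x p a y}"
          using nN a True m' by (auto simp: graph_edge_def)
        thus ?thesis using m \<open>m = n\<close> unfolding local_path_def
          by (meson rtrancl.rtrancl_into_rtrancl)
      qed
      ultimately show ?thesis using D' True m' by auto
    next
      case False
      thus ?thesis using assms(1) p D' by (auto simp: Inv_def)
    qed
  next
    fix p assume "p \<notin> Proc"
    thus "D' p = {}" using assms(1) dmP D' by (auto simp: Inv_def)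
  qed
qed

lemma inv_run: "Inv D \<Longrightarrow> run N dm out delta D rs D' \<Longrightarrow> Inv D'"
proof (induction rs arbitrary: D)
  case Nil thus ?case by simp
next
  case (Cons na rs)
  then obtain C'' where "step N dm out delta D na C''" "run N dm out delta C'' rs D'" by auto
  thus ?case using Cons inv_step by (metis prod.exhaust)
qed

lemma fin_enabled:
  assumes "Inv D" "enabled N dm nfin D" shows "D = C_fin Proc nfin"
proof
  fix p
  show "D p = C_fin Proc nfin p"
  proof (cases "p \<in> Proc")
    case True
    then obtain m where "D p = {m}" using assms(1) by (auto simp: Inv_def)
    moreover have "nfin \<in> D p" using assms(2) negs True by (auto simp: enabled_def)
    ultimately show ?thesis using True by (simp add: C_fin_def)
  next
    case False thus ?thesis using assms(1) by (simp add: Inv_def C_fin_def)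
  qed
qed

lemma fin_persist:
  "run N dm out delta D rs D' \<Longrightarrow> D p = {nfin} \<Longrightarrow> D' p = {nfin}"
proof (induction rs arbitrary: D)
  case Nil thus ?case by simp
next
  case (Cons na rs)
  obtain n a where na: "na = (n, a)" by fastforce
  obtain C'' where st: "step N dm out delta D (n,a) C''" and r: "run N dm out delta C'' rs D'"
    using Cons.prems na by auto
  have "C'' p = {nfin}"
  proof (cases "p \<in> dm n")
    case True
    hence "n \<in> D p" using st by (auto simp: step_def enabled_def)
    hence "n = nfin" using Cons.prems by simp
    moreover have "a \<in> out n" using st by (simp add: step_def)
    ultimately show ?thesis using negs by simp
  next
    case False thus ?thesis using st Cons.prems by (simp add: step_def)
  qed
  thus ?case using Cons.IH r by blast
qed

lemma first_move:
  "run N dm out delta D rs D' \<Longrightarrow> D p = {m} \<Longrightarrow> enabled N dm n D' \<Longrightarrow> p \<in> dm n \<Longrightarrow>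
   \<exists>E. reach D E \<and> E p = {m} \<and> enabled N dm m E"
proof (induction rs arbitrary: D)
  case Nil
  hence "n \<in> D p" unfolding enabled_def by auto
  hence "n = m" using Nil by simp
  thus ?case using Nil by (metis run.simps(1))
next
  case (Cons na rs)
  obtain n' a where na: "na = (n', a)" by fastforce
  obtain C'' where st: "step N dm out delta D (n',a) C''" and r: "run N dm out delta C'' rs D'"
    using Cons.prems na by auto
  show ?case
  proof (cases "p \<in> dm n'")
    case True
    hence "n' \<in> D p" using st by (auto simp: step_def enabled_def)
    hence "n' = m" using Cons.prems by simp
    hence "enabled N dm m D" using st by (simp add: step_def)
    thus ?thesis using Cons.prems by (metis run.simps(1))
  next
    case False
    hence "C'' p = {m}" using st Cons.prems by (simp add: step_def)
    then obtain E where "reach C'' E" "E p = {m}" "enabled N dm m E"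
      using Cons.IH r Cons.prems by blast
    moreover have "reach D C''" using st by (metis run.simps(1) run.simps(2))
    ultimately show ?thesis using reach_trans[of D C''] by blast
  qed
qed

lemma finite_inv: "finite {D. Inv D}"
proof -
  have "{D. Inv D} \<subseteq> {f. \<forall>x. (x \<in> Proc \<longrightarrow> f x \<in> Pow N) \<and> (x \<notin> Proc \<longrightarrow> f x = {})}"
    by (auto simp: Inv_def)
  moreover have "finite {f. \<forall>x. (x \<in> Proc \<longrightarrow> f x \<in> Pow N) \<and> (x \<notin> Proc \<longrightarrow> f x = {})}"
    using negs by (intro finite_set_of_finite_funs) auto
  ultimately show ?thesis by (rule finite_subset)
qed

lemma main:
  assumes C: "reach (C_init Proc ninit) C"
    and nodl: "\<forall>E. reach (C_init Proc ninit) E \<longrightarrow> \<not> deadlock N dm E"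
    and hyp: "\<forall>n\<in>N. local_path N dm out delta ninit n \<longrightarrow>
           (\<forall>p\<in>dm n. p_path N dm out delta p n nfin)"
  shows "reach C (C_fin Proc nfin)"
proof (rule ccontr)
  assume nf: "\<not> reach C (C_fin Proc nfin)"
  define Rs where "Rs D = {E. reach D E}" for D
  have invR: "\<And>E. reach (C_init Proc ninit) E \<Longrightarrow> Inv E"
  proof -
    fix E assume "reach (C_init Proc ninit) E"
    then obtain rs where "run N dm out delta (C_init Proc ninit) rs E" by blast
    thus "Inv E" by (rule inv_run[OF inv_init])
  qed
  have finR: "\<And>D. reach (C_init Proc ninit) D \<Longrightarrow> finite (Rs D)"
  proof -
    fix D assume "reach (C_init Proc ninit) D"
    hence "Rs D \<subseteq> {D. Inv D}" unfolding Rs_def using invR reach_trans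
      by (simp add: subset_iff del: ex_simps)
    thus "finite (Rs D)" using finite_inv finite_subset by blast
  qed
  have "C \<in> Rs C" unfolding Rs_def by (simp add: exI[of _ "[]"])
  then obtain D0 where D0: "D0 \<in> Rs C" and minD: "\<forall>D. D \<in> Rs C \<longrightarrow> card (Rs D0) \<le> card (Rs D)"
    using ex_has_least_nat[of "\<lambda>D. D \<in> Rs C" C "\<lambda>D. card (Rs D)"] by blast
  have rD0: "reach C D0" using D0 by (simp add: Rs_def)
  have iD0: "reach (C_init Proc ninit) D0" using reach_trans[OF C rD0] .
  have bkw: "\<And>E. reach D0 E \<Longrightarrow> reach E D0"
  proof -
    fix E assume e: "reach D0 E"
    have sub: "Rs E \<subseteq> Rs D0"
    proof
      fix x assume "x \<in> Rs E"
      hence "reach E x" by (simp add: Rs_def)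
      thus "x \<in> Rs D0" using reach_trans[OF e] by (simp add: Rs_def)
    qed
    have "E \<in> Rs C" unfolding Rs_def using reach_trans[OF rD0 e] by simp
    hence "card (Rs D0) \<le> card (Rs E)" using minD by blast
    hence "Rs E = Rs D0" using sub finR[OF iD0] by (simp add: card_seteq)
    moreover have "D0 \<in> Rs D0" unfolding Rs_def by (simp add: exI[of _ "[]"])
    ultimately have "D0 \<in> Rs E" by simp
    thus "reach E D0" unfolding Rs_def by simp
  qed
  have "\<not> deadlock N dm D0" using nodl iD0 by (simp del: ex_simps)
  then obtain n where en: "enabled N dm n D0" by (auto simp: deadlock_def)
  have iv: "Inv D0" using invR iD0 .
  have nN: "n \<in> N" using en by (simp add: enabled_def)
  have "n \<noteq> nfin"
  proof
    assume "n = nfin"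
    hence "D0 = C_fin Proc nfin" using fin_enabled iv en by simp
    thus False using nf rD0 by simp
  qed
  obtain p where p: "p \<in> dm n" using neg_dm[OF nN] by auto
  have pP: "p \<in> Proc" using neg_dm[OF nN] p by auto
  obtain m where m: "D0 p = {m}" "local_path N dm out delta ninit m"
    using iv pP by (auto simp: Inv_def)
  have "n \<in> D0 p" using en p by (simp add: enabled_def)
  hence Dn: "D0 p = {n}" and "m = n" using m by auto
  have lpn: "local_path N dm out delta ninit n" using m(2) \<open>m = n\<close> by simp
  have "p_path N dm out delta p n nfin" using hyp nN lpn p by simp
  hence "(n, nfin) \<in> {(x, y). \<exists>a. graph_edge N dm out delta x p a y}\<^sup>*" by (simp add: p_path_def)
  then obtain k where k: "(n, nfin) \<in> {(x, y). \<exists>a. graph_edge N dm out delta x p a y} ^^ k"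
    using rtrancl_imp_relpow by blast
  have claim: "\<And>D m. reach D0 D \<Longrightarrow> D p = {m} \<Longrightarrow>
      (m, nfin) \<in> {(x, y). \<exists>a. graph_edge N dm out delta x p a y} ^^ k \<Longrightarrow>
      \<exists>E. reach D0 E \<and> E p = {nfin}"
  proof (induction k)
    case 0 thus ?case by auto
  next
    case (Suc k)
    obtain m1 where e: "(m, m1) \<in> {(x, y). \<exists>a. graph_edge N dm out delta x p a y}"
      and r1: "(m1, nfin) \<in> {(x, y). \<exists>a. graph_edge N dm out delta x p a y} ^^ k"
      using relpow_Suc_D2[OF Suc.prems(3)] by blast
    obtain a where mN: "m \<in> N" and a: "a \<in> out m" and pm: "p \<in> dm m" and m1: "m1 \<in> delta m a p"
      using e by (auto simp: graph_edge_def)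
    have "reach D D0" using bkw[OF Suc.prems(1)] .
    then obtain rs0 where rs0: "run N dm out delta D rs0 D0" by blast
    obtain E where E: "reach D E" "E p = {m}" "enabled N dm m E"
      using first_move[OF rs0 Suc.prems(2) en p] by blast
    define E' where "E' = (\<lambda>q. if q \<in> dm m then delta m a q else E q)"
    have st: "step N dm out delta E (m, a) E'" using E a by (simp add: step_def E'_def)
    have "run N dm out delta E [(m,a)] E'" using st by simp
    hence "reach E E'" by blast
    hence rE': "reach D0 E'" using reach_trans[OF reach_trans[OF Suc.prems(1) E(1)]] by blast
    have pP': "p \<in> Proc" using neg_dm[OF mN] pm by auto
    obtain m' where "delta m a p = {m'}"
      using det pP' mN pm a unfolding deterministic_def deterministic_process_def by blast
    hence E'p: "E' p = {m1}" using m1 pm by (simp add: E'_def)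
    show ?case using Suc.IH[OF rE' E'p r1] .
  qed
  have r00: "reach D0 D0" by (simp add: exI[of _ "[]"])
  obtain E where E: "reach D0 E" "E p = {nfin}" using claim[OF r00 Dn k] by blast
  then obtain rs1 where "run N dm out delta E rs1 D0" using bkw[OF E(1)] by blast
  hence "D0 p = {nfin}" using fin_persist E(2) by blast
  thus False using Dn \<open>n \<noteq> nfin\<close> by simp
qed

end

theorem lemma2p3:
  fixes Proc :: "'p set" and N :: "'n set" and R :: "'r set"
    and dm :: "'n \<Rightarrow> 'p set" and ninit nfin :: 'n
    and out :: "'n \<Rightarrow> 'r set" and delta :: "'n \<Rightarrow> 'r \<Rightarrow> 'p \<Rightarrow> 'n set"
  assumes "is_negotiation Proc N R dm ninit nfin out delta"
    and "deterministic Proc N dm out delta"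
    and "\<forall>n\<in>N. local_path N dm out delta ninit n \<longrightarrow>
           (\<forall>p\<in>dm n. p_path N dm out delta p n nfin)"
  shows "\<not> sound Proc N dm ninit nfin out delta \<longleftrightarrow>
    (\<exists>rs C. run N dm out delta (C_init Proc ninit) rs C \<and> deadlock N dm C)"
proof
  assume ns: "\<not> sound Proc N dm ninit nfin out delta"
  show "\<exists>rs C. run N dm out delta (C_init Proc ninit) rs C \<and> deadlock N dm C"
  proof (rule ccontr)
    assume nd: "\<not> (\<exists>rs C. run N dm out delta (C_init Proc ninit) rs C \<and> deadlock N dm C)"
    have "sound Proc N dm ninit nfin out delta"
      unfolding sound_def
    proof (intro allI impI)
      fix rs C assume r: "run N dm out delta (C_init Proc ninit) rs C"
      have "\<exists>rs'. run N dm out delta C rs' (C_fin Proc nfin)"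
        using main[OF assms(1,2)] r nd assms(3) by blast
      thus "\<exists>rs'. run N dm out delta (C_init Proc ninit) (rs @ rs') (C_fin Proc nfin)"
        using r run_append by blast
    qed
    thus False using ns by simp
  qed
next
  assume "\<exists>rs C. run N dm out delta (C_init Proc ninit) rs C \<and> deadlock N dm C"
  then obtain rs C where r: "run N dm out delta (C_init Proc ninit) rs C" and dl: "deadlock N dm C"
    by blast
  show "\<not> sound Proc N dm ninit nfin out delta"
  proof
    assume "sound Proc N dm ninit nfin out delta"
    then obtain rs' where "run N dm out delta (C_init Proc ninit) (rs @ rs') (C_fin Proc nfin)"
      using r by (auto simp: sound_def)
    then obtain C'' where r1: "run N dm out delta (C_init Proc ninit) rs C''"
      and r2: "run N dm out delta C'' rs' (C_fin Proc nfin)" using run_append by blast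
    have "C'' = C" using run_det r r1 by metis
    show False
    proof (cases rs')
      case Nil
      hence "C = C_fin Proc nfin" using r2 \<open>C'' = C\<close> by simp
      moreover have "enabled N dm nfin (C_fin Proc nfin)"
        using negs[OF assms(1,2)] by (auto simp: enabled_def C_fin_def)
      ultimately show False using dl by (auto simp: deadlock_def)
    next
      case (Cons na rs2)
      then obtain C3 where "step N dm out delta C na C3" using r2 \<open>C'' = C\<close> by auto
      hence "enabled N dm (fst na) C" by (auto simp: step_def split: prod.splits)
      thus False using dl by (auto simp: deadlock_def)
    qed
  qed
qed

end
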